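(* For $f\in L^2(\mathbb{S}^1,\mathbb{C})$, identified with a $1$-periodic function on $\mathbb{R}$ via $z=e^{2\pi i\phi}$, define \[ \mathcal{T}f(\phi)=\frac12\Big[f\big(\tfrac{\phi}{2}\big)+f\big(\tfrac{\phi+1}{2}\big)\Big]+\frac{e^{\pi i\phi}}{2}\Big[f\big(\tfrac{3\phi}{2}\big)-f\big(\tfrac{3\phi+1}{2}\big)\Big]. \] Then Lebesgue measure $dx$ on $\mathbb{S}^1\cong[0,1)$ is invariant for $\mathcal{T}$: \[ \int_{\mathbb{S}^1}\mathcal{T}f\,dx=\int_{\mathbb{S}^1}f\,dx\quad\text{for all }f\in L^2(\mathbb{S}^1,\mathbb{C}). \]
   Context: $\mathbb{S}^1$ is the unit circle, parametrized by $\phi\in[0,1)$, and functions on it are identified with $1$-periodic functions on $\mathbb{R}$. This operator is the restriction to the unit circle of the operator $\sum a_nz^n\mapsto\sum a_nz^{T(n)}$, where $T$ is the Collatz map $T(n)=\frac{3n+1}2$ ($n$ odd), $T(n)=\frac n2$ ($n$ even). *)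

theory Defs
  imports "HOL-Analysis.Analysis"
begin

text \<open>Functions on the unit circle are identified with 1-periodic functions on the reals
  (parameter \<phi> \<in> [0,1), z = exp(2 pi i \<phi>)).\<close>

definition periodic1 :: "(real \<Rightarrow> complex) \<Rightarrow> bool" where
  "periodic1 f \<longleftrightarrow> (\<forall>x. f (x + 1) = f x)"

definition L2_circle :: "(real \<Rightarrow> complex) \<Rightarrow> bool" where
  "L2_circle f \<longleftrightarrow> f \<in> borel_measurable lborel \<and> periodic1 f \<and>
     set_integrable lborel {0..<1} (\<lambda>x. (norm (f x))^2)"

definition collatz_op :: "(real \<Rightarrow> complex) \<Rightarrow> real \<Rightarrow> complex" where
  "collatz_op f \<phi> =
     (1/2) * (f (\<phi>/2) + f ((\<phi>+1)/2))
     + exp (complex_of_real (pi * \<phi>) * \<i>) / 2 * (f (3*\<phi>/2) - f ((3*\<phi>+1)/2))"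

end

theory Submission
  imports Defs
begin

lemma sub_int:
  fixes g :: "real \<Rightarrow> complex" and c :: real
  assumes c: "c > 0"
  shows "(LINT x:{a..<b}|lborel. g (c*x+t)) = (1/c) * (LINT y:{c*a+t..<c*b+t}|lborel. g y)"
proof -
  have ind: "indicator {c*a+t..<c*b+t} (t + c*x) = (indicator {a..<b} x :: real)" for x
    using c by (auto simp: indicator_def)
  have "(LINT y:{c*a+t..<c*b+t}|lborel. g y) =
      \<bar>c\<bar> *\<^sub>R (\<integral>x. indicator {c*a+t..<c*b+t} (t + c*x) *\<^sub>R g (t + c*x) \<partial>lborel)"
    unfolding set_lebesgue_integral_def
    using lborel_integral_real_affine[of c "\<lambda>y. indicator {c*a+t..<c*b+t} y *\<^sub>R g y" t] c
    by simp
  also have "\<dots> = c *\<^sub>R (LINT x:{a..<b}|lborel. g (c*x+t))"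
    unfolding set_lebesgue_integral_def ind using c by (simp add: add.commute)
  finally show ?thesis using c by (simp add: scaleR_conv_of_real)
qed

lemma sub_integrable:
  fixes g :: "real \<Rightarrow> complex" and c :: real
  assumes c: "c > 0"
  shows "set_integrable lborel {a..<b} (\<lambda>x. g (c*x+t)) \<longleftrightarrow> set_integrable lborel {c*a+t..<c*b+t} g"
proof -
  have ind: "(\<lambda>x. indicator {c*a+t..<c*b+t} (t + c*x) *\<^sub>R g (t + c*x)) = (\<lambda>x. indicator {a..<b} x *\<^sub>R g (c*x+t))"
    using c by (auto simp: indicator_def add.commute)
  have "integrable lborel (\<lambda>x. indicator {c*a+t..<c*b+t} (t + c*x) *\<^sub>R g (t + c*x)) = integrable lborel (\<lambda>y. indicator {c*a+t..<c*b+t} y *\<^sub>R g y)"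
    by (rule lborel_integrable_real_affine_iff) (use c in auto)
  then show ?thesis
    unfolding set_integrable_def ind .
qed

lemma split_int:
  fixes g :: "real \<Rightarrow> complex"
  assumes "a \<le> b" "b \<le> c" "set_integrable lborel {a..<c} g"
  shows "(LINT x:{a..<c}|lborel. g x) = (LINT x:{a..<b}|lborel. g x) + (LINT x:{b..<c}|lborel. g x)"
proof -
  have i1: "set_integrable lborel {a..<b} g"
    by (rule set_integrable_subset[OF assms(3)]) (use assms in auto)
  have i2: "set_integrable lborel {b..<c} g"
    by (rule set_integrable_subset[OF assms(3)]) (use assms in auto)
  have "{a..<c} = {a..<b} \<union> {b..<c}" using assms by auto
  then show ?thesis using set_integral_Un[OF _ i1 i2] by simp
qed

lemma t_le: "(t::real) \<le> 1 + t^2"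
proof -
  have "0 \<le> (t-1/2)^2" by simp
  moreover have "(t-1/2)^2 = t^2 - t + 1/4" by (simp add: power2_eq_square algebra_simps)
  ultimately show ?thesis by linarith
qed

lemma L2_int:
  assumes "L2_circle f"
  shows "set_integrable lborel {0..<1} f"
proof -
  have m: "f \<in> borel_measurable lborel" and sq: "set_integrable lborel {0..<1} (\<lambda>x. (norm (f x))^2)"
    using assms unfolding L2_circle_def by auto
  have one: "set_integrable lborel {0..<1::real} (\<lambda>x. 1::real)"
    by (simp add: set_integrable_def)
  have "set_integrable lborel {0..<1} (\<lambda>x. 1 + (norm (f x))^2)"
    using set_integral_add(1)[OF one sq] by simp
  then have "integrable lborel (\<lambda>x. indicator {0..<1} x *\<^sub>R (1 + (norm (f x))^2))"
    unfolding set_integrable_def .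
  then show ?thesis
    unfolding set_integrable_def
  proof (rule Bochner_Integration.integrable_bound)
    show "(\<lambda>x. indicator {0..<1} x *\<^sub>R f x) \<in> borel_measurable lborel" using m by measurable
    show "AE x in lborel. norm (indicator {0..<1::real} x *\<^sub>R f x) \<le> norm (indicator {0..<1} x *\<^sub>R (1 + (norm (f x))^2))"
    proof (rule AE_I2)
      fix x
      have "norm (f x) \<le> 1 + (norm (f x))^2"
        by (rule t_le)
      then show "norm (indicator {0..<1::real} x *\<^sub>R f x) \<le> norm (indicator {0..<1} x *\<^sub>R (1 + (norm (f x))^2))"
        by (auto simp: indicator_def)
    qed
  qed
qed


lemma c_facts:
  defines "c \<equiv> exp (\<i> * complex_of_real (2*pi/3))"
  shows "1 + c + c^2 = 0" "exp (\<i> * complex_of_real (-pi/3)) = - c"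
proof -
  have "c^3 = exp (of_nat 3 * (\<i> * complex_of_real (2*pi/3)))"
    unfolding c_def by (rule exp_of_nat_mult[symmetric])
  also have "of_nat 3 * (\<i> * complex_of_real (2*pi/3)) = \<i> * (of_real pi * 2)"
    by (simp add: field_simps)
  finally have c3: "c^3 = 1" by simp
  have "c \<noteq> 1"
  proof
    assume "c = 1"
    then obtain n :: int where "2*pi/3 = of_int (2*n) * pi"
      unfolding c_def exp_eq_1 by auto
    then have "real_of_int (2*n) * 3 = 2" by (simp add: field_simps)
    then have "(2*n)*3 = (2::int)" by linarith
    then show False by presburger
  qed
  have "(c - 1) * (1 + c + c^2) = c^3 - 1" by (simp add: algebra_simps power2_eq_square power3_eq_cube)
  with c3 \<open>c \<noteq> 1\<close> show "1 + c + c^2 = 0" by simp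
  have "exp (\<i> * complex_of_real (-pi/3)) * exp (\<i> * of_real pi) = c"
    unfolding c_def exp_add[symmetric] by (rule arg_cong[where f=exp]) (simp add: field_simps)
  then show "exp (\<i> * complex_of_real (-pi/3)) = - c" by (simp add: minus_equation_iff)
qed

theorem mainTheorem5:
  fixes f :: "real \<Rightarrow> complex"
  assumes "L2_circle f"
  shows "(LINT x:{0..<1}|lborel. collatz_op f x) = (LINT x:{0..<1}|lborel. f x)"
proof -
  have m[measurable]: "f \<in> borel_measurable lborel" and per: "\<And>x. f (x+1) = f x"
    using assms unfolding L2_circle_def periodic1_def by auto
  have I01: "set_integrable lborel {0..<1} f" using L2_int[OF assms] .
  have "(\<lambda>x. f (1*x+1)) = f" using per by auto
  then have I12: "set_integrable lborel {1..<2} f"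
    using sub_integrable[where c=1 and a=0 and b=1 and t=1 and g=f] I01 by simp
  have I02: "set_integrable lborel {0..<2} f"
  proof -
    have "{0..<2::real} = {0..<1} \<union> {1..<2}" by auto
    then show ?thesis using set_integrable_Un[OF I01 I12] by simp
  qed
  define w where "w y = exp (\<i> * complex_of_real (2*pi*y/3))" for y
  define g where "g y = w y * f y" for y
  define c where "c = exp (\<i> * complex_of_real (2*pi/3))"
  define e where "e = exp (\<i> * complex_of_real (-pi/3))"
  have gm[measurable]: "g \<in> borel_measurable lborel" unfolding g_def w_def by measurable
  have nw: "norm (w y) = 1" for y unfolding w_def by simp
  have gI02: "set_integrable lborel {0..<2} g"
    using I02 unfolding set_integrable_def
  proof (rule Bochner_Integration.integrable_bound)
    show "(\<lambda>x. indicator {0..<2} x *\<^sub>R g x) \<in> borel_measurable lborel" by measurable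
    show "AE x in lborel. norm (indicator {0..<2::real} x *\<^sub>R g x) \<le> norm (indicator {0..<2} x *\<^sub>R f x)"
      by (rule AE_I2) (simp add: g_def norm_mult nw)
  qed
  have gshift: "g (1*x+1) = c * g x" for x
  proof -
    have "w (x+1) = w x * c"
      unfolding w_def c_def exp_add[symmetric] by (rule arg_cong[where f=exp]) (simp add: field_simps)
    then show ?thesis unfolding g_def using per by simp
  qed
  have pt: "collatz_op f x = (1/2) * (f ((1/2)*x+0) + f ((1/2)*x+1/2)) + (1/2) * (g ((3/2)*x+0) - e * g ((3/2)*x+1/2))" for x
  proof -
    have a1: "f ((x+1)/2) = f ((1/2)*x+1/2)" by (rule arg_cong[where f=f]) simp
    have a2: "f ((3*x+1)/2) = f ((3/2)*x+1/2)" by (rule arg_cong[where f=f]) simp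
    have a3: "f (3*x/2) = f ((3/2)*x+0)" by (rule arg_cong[where f=f]) simp
    have a4: "f (x/2) = f ((1/2)*x+0)" by (rule arg_cong[where f=f]) simp
    have w1: "w ((3/2)*x+0) = exp (complex_of_real (pi * x) * \<i>)"
      unfolding w_def by (rule arg_cong[where f=exp]) (simp add: field_simps)
    have w2: "e * w ((3/2)*x+1/2) = exp (complex_of_real (pi * x) * \<i>)"
      unfolding w_def e_def exp_add[symmetric] by (rule arg_cong[where f=exp]) (simp add: field_simps)
    have g1: "g ((3/2)*x+0) = exp (complex_of_real (pi * x) * \<i>) * f ((3/2)*x+0)"
      unfolding g_def w1 ..
    have g2: "e * g ((3/2)*x+1/2) = exp (complex_of_real (pi * x) * \<i>) * f ((3/2)*x+1/2)"
      unfolding g_def mult.assoc[symmetric] w2 ..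
    show ?thesis
      unfolding collatz_op_def a1 a2 a3 a4 g1 g2
      by (simp add: algebra_simps)
  qed
  define F where "F a b = (LINT x:{a..<b}|lborel. f x)" for a b
  define G where "G a b = (LINT x:{a..<b}|lborel. g x)" for a b
  have P1: "(LINT x:{0..<1}|lborel. f ((1/2)*x+0)) = 2 * F 0 (1/2)"
    using sub_int[where c="1/2" and a=0 and b=1 and t=0 and g=f] unfolding F_def by simp
  have P2: "(LINT x:{0..<1}|lborel. f ((1/2)*x+1/2)) = 2 * F (1/2) 1"
    using sub_int[where c="1/2" and a=0 and b=1 and t="1/2" and g=f] unfolding F_def by simp
  have Q1: "(LINT x:{0..<1}|lborel. g ((3/2)*x+0)) = (2/3) * G 0 (3/2)"
    using sub_int[where c="3/2" and a=0 and b=1 and t=0 and g=g] unfolding G_def by simp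
  have Q2: "(LINT x:{0..<1}|lborel. g ((3/2)*x+1/2)) = (2/3) * G (1/2) 2"
    using sub_int[where c="3/2" and a=0 and b=1 and t="1/2" and g=g] unfolding G_def by simp
  have iP1: "set_integrable lborel {0..<1} (\<lambda>x. f ((1/2)*x+0))"
    using sub_integrable[where c="1/2" and a=0 and b=1 and t=0 and g=f]
      set_integrable_subset[OF I02, of "{0..<1/2}"] by simp
  have iP2: "set_integrable lborel {0..<1} (\<lambda>x. f ((1/2)*x+1/2))"
    using sub_integrable[where c="1/2" and a=0 and b=1 and t="1/2" and g=f]
      set_integrable_subset[OF I02, of "{1/2..<1}"] by simp
  have iQ1: "set_integrable lborel {0..<1} (\<lambda>x. g ((3/2)*x+0))"
    using sub_integrable[where c="3/2" and a=0 and b=1 and t=0 and g=g]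
      set_integrable_subset[OF gI02, of "{0..<3/2}"] by simp
  have iQ2: "set_integrable lborel {0..<1} (\<lambda>x. g ((3/2)*x+1/2))"
    using sub_integrable[where c="3/2" and a=0 and b=1 and t="1/2" and g=g]
      set_integrable_subset[OF gI02, of "{1/2..<2}"] by simp
  have "(LINT x:{0..<1}|lborel. collatz_op f x) =
     (LINT x:{0..<1}|lborel. (1/2) * (f ((1/2)*x+0) + f ((1/2)*x+1/2)) + (1/2) * (g ((3/2)*x+0) - e * g ((3/2)*x+1/2)))"
    unfolding pt ..
  also have "\<dots> = (1/2) * ((LINT x:{0..<1}|lborel. f ((1/2)*x+0)) + (LINT x:{0..<1}|lborel. f ((1/2)*x+1/2)))
      + (1/2) * ((LINT x:{0..<1}|lborel. g ((3/2)*x+0)) - e * (LINT x:{0..<1}|lborel. g ((3/2)*x+1/2)))"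
    using iP1 iP2 iQ1 iQ2 by (simp add: set_integral_add set_integral_diff)
  also have "\<dots> = (1/2) * (2 * F 0 (1/2) + 2 * F (1/2) 1) + (1/2) * ((2/3) * G 0 (3/2) - e * ((2/3) * G (1/2) 2))"
    by (simp only: P1 P2 Q1 Q2)
  finally have L: "(LINT x:{0..<1}|lborel. collatz_op f x) =
      (1/2) * (2 * F 0 (1/2) + 2 * F (1/2) 1) + (1/2) * ((2/3) * G 0 (3/2) - e * ((2/3) * G (1/2) 2))" .
  have F01: "F 0 1 = F 0 (1/2) + F (1/2) 1"
    unfolding F_def by (rule split_int) (use I01 in auto)
  have gI: "set_integrable lborel {a..<b} g" if "0 \<le> a" "b \<le> 2" for a b
    by (rule set_integrable_subset[OF gI02]) (use that in auto)
  have sh: "G (a+1) (b+1) = c * G a b" if "0 \<le> a" "a \<le> b" for a b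
  proof -
    have "G (a+1) (b+1) = (LINT x:{a..<b}|lborel. g (1*x+1))"
      using sub_int[where c=1 and a=a and b=b and t=1 and g=g] unfolding G_def by (simp add: add.commute)
    also have "\<dots> = c * G a b" unfolding gshift G_def by simp
    finally show ?thesis .
  qed
  have G1: "G 0 (3/2) = G 0 (1/2) + G (1/2) 1 + G 1 (3/2)"
    unfolding G_def
    using split_int[of 0 1 "3/2" g] split_int[of 0 "1/2" 1 g] gI by simp
  have G2: "G (1/2) 2 = G (1/2) 1 + G 1 (3/2) + G (3/2) 2"
    unfolding G_def
    using split_int[of "1/2" 1 2 g] split_int[of 1 "3/2" 2 g] gI by simp
  have s1: "G 1 (3/2) = c * G 0 (1/2)" using sh[of 0 "1/2"] by simp
  have s2: "G (3/2) 2 = c * G (1/2) 1" using sh[of "1/2" 1] by simp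
  have cf: "1 + c + c^2 = 0" "e = - c" unfolding c_def e_def using c_facts by auto
  have "(1/2) * ((2/3) * G 0 (3/2) - e * ((2/3) * G (1/2) 2)) = (1/3) * (1 + c + c^2) * (G 0 (1/2) + G (1/2) 1)"
    unfolding G1 G2 s1 s2 cf(2) by (simp add: field_simps power2_eq_square)
  then have "(1/2) * ((2/3) * G 0 (3/2) - e * ((2/3) * G (1/2) 2)) = 0" using cf(1) by simp
  then have "(LINT x:{0..<1}|lborel. collatz_op f x) = F 0 (1/2) + F (1/2) 1"
    unfolding L by simp
  then show ?thesis using F01 unfolding F_def by simp
qed

end
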